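(* Let $(X,d)$ be a complete metric space, let $F:(0,\infty)\to\mathbb{R}$ be right-continuous, and let $\varphi:(0,\infty)\to(0,\infty)$ satisfy: for every $t>0$ and every sequence $(t_n)\subset(t,\infty)$ with $t_n\to t$, $\limsup_{n\to\infty}\varphi(t_n)>0$. Let $T:X\to X$ be contractive and such that for all $x,y\in X$ with $Tx\neq Ty$, $$\varphi(d(x,y))+F(d(Tx,Ty))\le F(d(x,y)).$$ Then $T$ is a Picard operator.
   Context: $T$ is contractive if $d(Tx,Ty)<d(x,y)$ for all $x\neq y$. $T$ is a Picard operator if $T$ has a unique fixed point $u\in X$ and for every $x\in X$ the sequence $(T^nx)_{n\in\mathbb{N}}$ converges to $u$. *)

theory Defs
  imports "HOL-Analysis.Analysis"
begin

definition contractive :: "('a::metric_space \<Rightarrow> 'a) \<Rightarrow> bool" where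
  "contractive T \<longleftrightarrow> (\<forall>x y. x \<noteq> y \<longrightarrow> dist (T x) (T y) < dist x y)"

definition picard_operator :: "('a::metric_space \<Rightarrow> 'a) \<Rightarrow> bool" where
  "picard_operator T \<longleftrightarrow> (\<exists>u. T u = u \<and> (\<forall>v. T v = v \<longrightarrow> v = u)
      \<and> (\<forall>x. (\<lambda>n. (T ^^ n) x) \<longlonglongrightarrow> u))"

end

theory Submission
  imports Defs
begin

lemma key_contra:
  fixes F \<phi> :: "real \<Rightarrow> real" and a b :: "nat \<Rightarrow> real"
  assumes t: "t > 0" and Fc: "continuous (at_right t) F"
    and a_gt: "\<forall>n. a n > t" and b_gt: "\<forall>n. b n > t"
    and a_lim: "a \<longlonglongrightarrow> t" and b_lim: "b \<longlonglongrightarrow> t"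
    and ineq: "\<forall>n. \<phi> (a n) + F (b n) \<le> F (a n)"
    and ls: "limsup (\<lambda>n. ereal (\<phi> (a n))) > 0"
  shows False
proof -
  have Ft: "(F \<longlongrightarrow> F t) (at_right t)" using Fc by (simp add: continuous_within)
  have fa: "filterlim a (at_right t) sequentially"
    by (rule tendsto_imp_filterlim_at_right[OF a_lim]) (use a_gt in auto)
  have fb: "filterlim b (at_right t) sequentially"
    by (rule tendsto_imp_filterlim_at_right[OF b_lim]) (use b_gt in auto)
  have Fa: "(\<lambda>n. F (a n)) \<longlonglongrightarrow> F t" by (rule filterlim_compose[OF Ft fa])
  have Fb: "(\<lambda>n. F (b n)) \<longlonglongrightarrow> F t" by (rule filterlim_compose[OF Ft fb])
  have g: "(\<lambda>n. F (a n) - F (b n)) \<longlonglongrightarrow> 0"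
    using tendsto_diff[OF Fa Fb] by simp
  have "limsup (\<lambda>n. ereal (\<phi> (a n))) \<le> limsup (\<lambda>n. ereal (F (a n) - F (b n)))"
    by (rule Limsup_mono) (use ineq in \<open>auto intro!: always_eventually simp: algebra_simps\<close>)
  also have "\<dots> = ereal 0"
    by (rule lim_imp_Limsup) (use g in auto)
  finally show False using ls by (metis leD zero_ereal_def)
qed

lemma dist_sum_bound:
  fixes x :: "nat \<Rightarrow> 'a::metric_space"
  shows "dist (x a) (x (a + p)) \<le> (\<Sum>i<p. dist (x (a + i)) (x (a + i + 1)))"
proof (induction p)
  case 0 then show ?case by simp
next
  case (Suc p)
  have "dist (x a) (x (a + Suc p)) \<le> dist (x a) (x (a + p)) + dist (x (a + p)) (x (a + p + 1))"
    using dist_triangle by simp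
  then show ?case using Suc by simp
qed

lemma orbit_convergent:
  fixes T :: "'a::complete_space \<Rightarrow> 'a"
    and F :: "real \<Rightarrow> real"
    and \<phi> :: "real \<Rightarrow> real"
  assumes F_rcont: "\<And>t. t > 0 \<Longrightarrow> continuous (at_right t) F"
    and \<phi>_pos: "\<And>t. t > 0 \<Longrightarrow> \<phi> t > 0"
    and \<phi>_limsup: "\<And>t s. t > 0 \<Longrightarrow> (\<forall>n. s n > t) \<Longrightarrow> s \<longlonglongrightarrow> t
                 \<Longrightarrow> limsup (\<lambda>n. ereal (\<phi> (s n))) > 0"
    and T_contr: "contractive T"
    and T_ineq: "\<And>x y. T x \<noteq> T y \<Longrightarrow>
                 \<phi> (dist x y) + F (dist (T x) (T y)) \<le> F (dist x y)"
  shows "convergent (\<lambda>n. (T ^^ n) x0)"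
proof -
  define x where "x = (\<lambda>n. (T ^^ n) x0)"
  have xS: "x (Suc n) = T (x n)" for n by (simp add: x_def)
  have Tle: "dist (T u) (T v) \<le> dist u v" for u v
    using T_contr unfolding contractive_def by (cases "u = v") (auto intro: less_imp_le)
  have step: "dist (x (Suc a)) (x (Suc b)) \<le> dist (x a) (x b)" for a b
    using Tle by (simp add: xS)
  show ?thesis
  proof (cases "\<exists>n. x n = x (Suc n)")
    case True
    then obtain n where n: "x n = x (Suc n)" by blast
    have "x m = x n" if "m \<ge> n" for m
      using that
    proof (induction m rule: dec_induct)
      case base then show ?case by simp
    next
      case (step m) then show ?case using n by (metis xS)
    qed
    then have "eventually (\<lambda>m. x m = x n) sequentially" unfolding eventually_sequentially by blast
    then have "x \<longlonglongrightarrow> x n" by (rule tendsto_eventually)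
    then show ?thesis unfolding x_def convergent_def by blast
  next
    case False
    then have ne: "x n \<noteq> x (Suc n)" for n by blast
    define d where "d = (\<lambda>n. dist (x n) (x (Suc n)))"
    have dpos: "d n > 0" for n using ne by (simp add: d_def)
    have dS: "d (Suc n) < d n" for n
    proof -
      have "dist (T (x n)) (T (x (Suc n))) < dist (x n) (x (Suc n))"
        using T_contr ne unfolding contractive_def by blast
      then show ?thesis unfolding d_def by (simp only: xS)
    qed
    have dS': "d (Suc n) \<le> d n" for n using dS less_imp_le by blast
    have ddec: "decseq d" using dS' by (simp add: decseq_Suc_iff)
    have d0: "d \<longlonglongrightarrow> 0"
    proof -
      obtain r where r: "d \<longlonglongrightarrow> r" "\<forall>i. r \<le> d i"
        using decseq_convergent[OF ddec, of 0] dpos less_imp_le by blast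
      have r0: "r \<ge> 0" using r(2) dpos[of 0] LIMSEQ_le_const[OF r(1), of 0] dpos less_imp_le by blast
      have "r = 0"
      proof (rule ccontr)
        assume "r \<noteq> 0"
        then have rp: "r > 0" using r0 by simp
        have dgt: "\<forall>n. d n > r" using dS r(2) by (metis order_le_less_trans)
        have dgt': "\<forall>n. d (Suc n) > r" using dgt by blast
        have ineq: "\<forall>n. \<phi> (d n) + F (d (Suc n)) \<le> F (d n)"
        proof
          fix n
          have "T (x n) \<noteq> T (x (Suc n))" using ne[of "Suc n"] by (simp add: xS)
          from T_ineq[OF this] show "\<phi> (d n) + F (d (Suc n)) \<le> F (d n)"
            by (simp add: d_def xS)
        qed
        show False
          by (rule key_contra[OF rp F_rcont[OF rp] dgt dgt' r(1) LIMSEQ_Suc[OF r(1)] ineq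
                \<phi>_limsup[OF rp dgt r(1)]])
      qed
      then show ?thesis using r(1) by simp
    qed
    have tri: "dist u v \<le> dist u u' + dist u' v' + dist v v'" for u v u' v' :: 'a
      by metric
    have dmono: "d j \<le> d i" if "i \<le> j" for i j using ddec that by (simp add: decseq_def)
    have "Cauchy x"
    proof (rule ccontr)
      assume "\<not> Cauchy x"
      then obtain e where e: "e > 0" "\<forall>M. \<exists>m\<ge>M. \<exists>n\<ge>M. \<not> dist (x m) (x n) < e"
        unfolding Cauchy_def by blast
      define \<epsilon> where "\<epsilon> = e / 2"
      have \<epsilon>p: "\<epsilon> > 0" using e by (simp add: \<epsilon>_def)
      have pairs: "\<exists>a b. \<epsilon> < a \<and> \<epsilon> < b \<and> b \<le> a \<and> a \<le> \<epsilon> + \<epsilon> / real (Suc k) \<and> \<phi> a + F b \<le> F a" for k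
      proof -
        define \<eta> where "\<eta> = \<epsilon> / (4 * real (Suc k))"
        have \<eta>p: "\<eta> > 0" using \<epsilon>p by (simp add: \<eta>_def)
        have \<eta>4: "4 * \<eta> = \<epsilon> / real (Suc k)" by (simp add: \<eta>_def field_simps)
        have \<eta>2: "2 * \<eta> < \<epsilon>"
        proof -
          have "\<epsilon> / real (Suc k) \<le> \<epsilon>" using \<epsilon>p by (simp add: divide_le_eq)
          then show ?thesis using \<eta>4 \<eta>p by linarith
        qed
        obtain N where N: "\<forall>i\<ge>N. d i < \<eta>"
          using order_tendstoD(2)[OF d0 \<eta>p] unfolding eventually_sequentially by blast
        obtain m n where mn: "m \<ge> N" "n \<ge> N" "dist (x m) (x n) \<ge> e"
          using e(2) by (meson not_less)
        obtain n p where np: "n \<ge> N" "p > 0" "dist (x n) (x (n + p)) \<ge> e"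
        proof (cases "n < m")
          case True
          then show ?thesis using that[of n "m - n"] mn by (simp add: dist_commute)
        next
          case False
          have "m \<noteq> n" using mn e by auto
          then have "m < n" using False by simp
          then show ?thesis using that[of m "n - m"] mn by simp
        qed
        define s where "s = (\<lambda>j. dist (x (n + j)) (x (n + j + p)))"
        have sS: "s j \<le> s (Suc j) + 2 * \<eta>" for j
        proof -
          have "s j \<le> d (n + j) + s (Suc j) + d (n + j + p)"
            using tri[of "x (n + j)" "x (n + j + p)" "x (Suc (n + j))" "x (Suc (n + j + p))"]
            by (simp add: s_def d_def)
          moreover have "d (n + j) < \<eta>" "d (n + j + p) < \<eta>" using N np(1) by auto
          ultimately show ?thesis by linarith
        qed
        have sS': "s (Suc j) \<le> s j" for j
          using step[of "n + j" "n + j + p"] by (simp add: s_def)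
        have ex: "\<exists>j. s j \<le> \<epsilon>"
        proof -
          have "(\<epsilon> / real p) > 0" using \<epsilon>p np(2) by simp
          from order_tendstoD(2)[OF d0 this] obtain j where j: "d (n + j) < \<epsilon> / real p"
            unfolding eventually_sequentially by (meson le_add2)
          have "s j \<le> (\<Sum>i<p. dist (x (n + j + i)) (x (n + j + i + 1)))"
            unfolding s_def by (rule dist_sum_bound)
          also have "\<dots> = (\<Sum>i<p. d (n + j + i))" by (simp add: d_def)
          also have "\<dots> \<le> of_nat (card {..<p}) * d (n + j)"
            by (rule sum_bounded_above) (simp add: dmono)
          also have "\<dots> < \<epsilon>" using j np(2) by (simp add: field_simps)
          finally show ?thesis by (auto intro: less_imp_le)
        qed
        define j0 where "j0 = (LEAST j. s j \<le> \<epsilon>)"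
        have j0: "s j0 \<le> \<epsilon>" unfolding j0_def by (rule LeastI_ex[OF ex])
        have bef: "s j > \<epsilon>" if "j < j0" for j
          using not_less_Least[OF that[unfolded j0_def]] by simp
        have s0: "s 0 \<ge> 2 * \<epsilon>" using np(3) by (simp add: s_def \<epsilon>_def)
        have "j0 \<noteq> 0"
        proof
          assume "j0 = 0" then show False using j0 s0 \<epsilon>p by simp
        qed
        moreover have "j0 \<noteq> 1" using j0 s0 sS[of 0] \<eta>2 by auto
        ultimately have "2 \<le> j0" by linarith
        then obtain i0 where "j0 = 2 + i0" using le_Suc_ex by blast
        then obtain i where i: "j0 = Suc (Suc i)" by simp
        have a1: "s i > \<epsilon>" "s (Suc i) > \<epsilon>" using bef i by auto
        have a2: "s i \<le> \<epsilon> + \<epsilon> / real (Suc k)"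
        proof -
          have "s (Suc (Suc i)) \<le> \<epsilon>" using j0 i by simp
          then show ?thesis using sS[of i] sS[of "Suc i"] \<eta>4 by linarith
        qed
        have a3: "\<phi> (s i) + F (s (Suc i)) \<le> F (s i)"
        proof -
          have e1: "x (n + Suc i) = T (x (n + i))" using xS[of "n + i"] by simp
          have e2: "x (n + Suc i + p) = T (x (n + i + p))" using xS[of "n + i + p"] by simp
          have sSi: "s (Suc i) = dist (T (x (n + i))) (T (x (n + i + p)))"
            unfolding s_def by (simp only: e1 e2)
          have "T (x (n + i)) \<noteq> T (x (n + i + p))"
          proof
            assume "T (x (n + i)) = T (x (n + i + p))"
            then have "s (Suc i) = 0" using sSi by simp
            then show False using a1(2) \<epsilon>p by simp
          qed
          from T_ineq[OF this] show ?thesis unfolding sSi by (simp add: s_def)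
        qed
        show ?thesis using a1 a2 a3 sS'[of i] by blast
      qed
      define Q where "Q = (\<lambda>k a b. \<epsilon> < a \<and> \<epsilon> < b \<and> b \<le> a \<and> a \<le> \<epsilon> + \<epsilon> / real (Suc k) \<and> \<phi> a + F b \<le> F a)"
      have exQ: "\<exists>ab. Q k (fst ab) (snd ab)" for k
        using pairs[of k] unfolding Q_def by auto
      define A where "A k = fst (SOME ab. Q k (fst ab) (snd ab))" for k
      define B where "B k = snd (SOME ab. Q k (fst ab) (snd ab))" for k
      have QAB: "Q k (A k) (B k)" for k
        unfolding A_def B_def by (rule someI_ex[OF exQ])
      have AB: "\<epsilon> < A k \<and> \<epsilon> < B k \<and> B k \<le> A k
          \<and> A k \<le> \<epsilon> + \<epsilon> / real (Suc k) \<and> \<phi> (A k) + F (B k) \<le> F (A k)" for k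
        using QAB[of k] unfolding Q_def by simp
      have up: "(\<lambda>k. \<epsilon> + \<epsilon> / real (Suc k)) \<longlonglongrightarrow> \<epsilon>"
        using tendsto_add[OF tendsto_const LIMSEQ_Suc[OF lim_const_over_n[of \<epsilon>]]] by simp
      have Au: "A k \<le> \<epsilon> + \<epsilon> / real (Suc k)" and Bu: "B k \<le> \<epsilon> + \<epsilon> / real (Suc k)"
        and Alo: "\<epsilon> \<le> A k" and Blo: "\<epsilon> \<le> B k" for k
        using AB[of k] by linarith+
      have Al: "A \<longlonglongrightarrow> \<epsilon>"
        by (rule tendsto_sandwich[OF _ _ tendsto_const up]) (use Au Alo in \<open>auto intro!: always_eventually\<close>)
      have Bl: "B \<longlonglongrightarrow> \<epsilon>"
        by (rule tendsto_sandwich[OF _ _ tendsto_const up]) (use Bu Blo in \<open>auto intro!: always_eventually\<close>)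
      have Ag: "\<forall>k. A k > \<epsilon>" and Bg: "\<forall>k. B k > \<epsilon>" and ABi: "\<forall>k. \<phi> (A k) + F (B k) \<le> F (A k)"
        using AB by auto
      show False
        by (rule key_contra[OF \<epsilon>p F_rcont[OF \<epsilon>p] Ag Bg Al Bl ABi \<phi>_limsup[OF \<epsilon>p Ag Al]])
    qed
    then show ?thesis unfolding x_def by (rule Cauchy_convergent)
  qed
qed

lemma T_tendsto:
  assumes "\<And>u v. dist (T u) (T v) \<le> dist u v" and "X \<longlonglongrightarrow> L"
  shows "(\<lambda>n. T (X n)) \<longlonglongrightarrow> T L"
proof -
  have "(\<lambda>n. dist (X n) L) \<longlonglongrightarrow> 0" using assms(2) by (rule tendsto_dist_iff[THEN iffD1])
  then have "(\<lambda>n. dist (T (X n)) (T L)) \<longlonglongrightarrow> 0"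
  proof (rule Lim_null_comparison[rotated])
    show "\<forall>\<^sub>F n in sequentially. norm (dist (T (X n)) (T L)) \<le> dist (X n) L"
      by (rule always_eventually) (simp add: assms(1))
  qed
  then show ?thesis by (rule tendsto_dist_iff[THEN iffD2])
qed

theorem mainTheorem7:
  fixes T :: "'a::complete_space \<Rightarrow> 'a"
    and F :: "real \<Rightarrow> real"
    and \<phi> :: "real \<Rightarrow> real"
  assumes F_rcont: "\<And>t. t > 0 \<Longrightarrow> continuous (at_right t) F"
    and \<phi>_pos: "\<And>t. t > 0 \<Longrightarrow> \<phi> t > 0"
    and \<phi>_limsup: "\<And>t s. t > 0 \<Longrightarrow> (\<forall>n. s n > t) \<Longrightarrow> s \<longlonglongrightarrow> t
                 \<Longrightarrow> limsup (\<lambda>n. ereal (\<phi> (s n))) > 0"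
    and T_contr: "contractive T"
    and T_ineq: "\<And>x y. T x \<noteq> T y \<Longrightarrow>
                 \<phi> (dist x y) + F (dist (T x) (T y)) \<le> F (dist x y)"
  shows "picard_operator T"
proof -
  have Tle: "dist (T u) (T v) \<le> dist u v" for u v
    using T_contr unfolding contractive_def by (cases "u = v") (auto intro: less_imp_le)
  have uniq: "u = v" if "T u = u" "T v = v" for u v
    using T_contr that unfolding contractive_def by force
  have fix_lim: "\<exists>L. T L = L \<and> (\<lambda>n. (T ^^ n) x0) \<longlonglongrightarrow> L" for x0
  proof -
    have "convergent (\<lambda>n. (T ^^ n) x0)"
      by (rule orbit_convergent[OF F_rcont \<phi>_pos \<phi>_limsup T_contr T_ineq])
    then obtain L where L: "(\<lambda>n. (T ^^ n) x0) \<longlonglongrightarrow> L"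
      unfolding convergent_def by blast
    have "(\<lambda>n. (T ^^ Suc n) x0) \<longlonglongrightarrow> L" using LIMSEQ_Suc[OF L] .
    moreover have "(\<lambda>n. (T ^^ Suc n) x0) \<longlonglongrightarrow> T L" using T_tendsto[OF Tle L] by simp
    ultimately have "T L = L" using LIMSEQ_unique by blast
    then show ?thesis using L by blast
  qed
  obtain u where u: "T u = u" using fix_lim by blast
  show ?thesis unfolding picard_operator_def
  proof (intro exI[of _ u] conjI allI impI)
    show "T u = u" by (rule u)
    show "v = u" if "T v = v" for v using uniq[OF that u] .
    fix x0
    obtain L where "T L = L" "(\<lambda>n. (T ^^ n) x0) \<longlonglongrightarrow> L" using fix_lim by blast
    then show "(\<lambda>n. (T ^^ n) x0) \<longlonglongrightarrow> u" using uniq[OF _ u] by blast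
  qed
qed

end
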